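(* Let $G$ be a graph, $\theta$ a real number, and $u,v$ two distinct $\theta$-positive vertices of $G$. Then $\mathrm{mult}(\theta,G\setminus\{u,v\})\le\mathrm{mult}(\theta,G)$ if and only if there exists a path $P$ in $G$ from $u$ to $v$ such that $\mathrm{mult}(\theta,G\setminus P)\le\mathrm{mult}(\theta,G)$.
   Context: All graphs are finite and simple. For a graph $G$ on $n$ vertices, let $p(G,r)$ be the number of $r$-matchings of $G$ ($p(G,0)=1$); the matching polynomial is $\mu(G,x)=\sum_{r=0}^{\lfloor n/2\rfloor}(-1)^r p(G,r)x^{n-2r}$ (the graph with no vertices has $\mu=1$). For real $\theta$, $\mathrm{mult}(\theta,G)$ is the multiplicity of $\theta$ as a root of $\mu(G,x)$ (it is $0$ if $\theta$ is not a root). $G\setminus X$ denotes deletion of the vertex set $X$ and its incident edges; for a path $P$, $G\setminus P$ is $G$ with all vertices of $P$ deleted. A vertex $u$ is $\theta$-positive in $G$ if $\mathrm{mult}(\theta,G\setminus\{u\})=\mathrm{mult}(\theta,G)+1$. *)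

theory Defs
  imports "HOL-Computational_Algebra.Polynomial"
begin

type_synonym 'a graph = "'a set \<times> 'a set set"

definition verts :: "'a graph \<Rightarrow> 'a set" where "verts G = fst G"
definition edges :: "'a graph \<Rightarrow> 'a set set" where "edges G = snd G"

definition graph :: "'a graph \<Rightarrow> bool" where
  "graph G \<longleftrightarrow> finite (verts G) \<and>
     (\<forall>e\<in>edges G. e \<subseteq> verts G \<and> card e = 2)"

definition del_verts :: "'a graph \<Rightarrow> 'a set \<Rightarrow> 'a graph" where
  "del_verts G X = (verts G - X, {e \<in> edges G. e \<inter> X = {}})"

definition matchings :: "'a graph \<Rightarrow> nat \<Rightarrow> 'a set set set" where
  "matchings G r = {M. M \<subseteq> edges G \<and> card M = r \<and>
      (\<forall>e\<in>M. \<forall>f\<in>M. e \<noteq> f \<longrightarrow> e \<inter> f = {})}"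

definition num_matchings :: "'a graph \<Rightarrow> nat \<Rightarrow> nat" where
  "num_matchings G r = card (matchings G r)"

definition match_poly :: "'a graph \<Rightarrow> real poly" where
  "match_poly G = (\<Sum>r\<le>card (verts G) div 2.
      monom ((-1) ^ r * real (num_matchings G r)) (card (verts G) - 2 * r))"

definition mult :: "real \<Rightarrow> 'a graph \<Rightarrow> nat" where
  "mult \<theta> G = order \<theta> (match_poly G)"

definition theta_positive :: "real \<Rightarrow> 'a graph \<Rightarrow> 'a \<Rightarrow> bool" where
  "theta_positive \<theta> G u \<longleftrightarrow> u \<in> verts G \<and> mult \<theta> (del_verts G {u}) = mult \<theta> G + 1"

definition is_path :: "'a graph \<Rightarrow> 'a list \<Rightarrow> 'a \<Rightarrow> 'a \<Rightarrow> bool" where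
  "is_path G P u v \<longleftrightarrow> P \<noteq> [] \<and> distinct P \<and> set P \<subseteq> verts G \<and>
     hd P = u \<and> last P = v \<and>
     (\<forall>i. Suc i < length P \<longrightarrow> {P ! i, P ! Suc i} \<in> edges G)"

end

theory Submission
  imports Defs
begin

definition allm :: "'a graph \<Rightarrow> 'a set set set" where
  "allm G = {M. M \<subseteq> edges G \<and> (\<forall>e\<in>M. \<forall>f\<in>M. e \<noteq> f \<longrightarrow> e \<inter> f = {})}"

lemma verts_del[simp]: "verts (del_verts G X) = verts G - X"
  by (simp add: del_verts_def verts_def)
lemma edges_del[simp]: "edges (del_verts G X) = {e \<in> edges G. e \<inter> X = {}}"
  by (simp add: del_verts_def edges_def)

lemma del_del: "del_verts (del_verts G A) B = del_verts G (A \<union> B)"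
  by (auto simp: del_verts_def verts_def edges_def)

lemma graph_del: "graph G \<Longrightarrow> graph (del_verts G X)"
  by (auto simp: graph_def)

lemma finite_edges: "graph G \<Longrightarrow> finite (edges G)"
proof -
  assume g: "graph G"
  have "edges G \<subseteq> Pow (verts G)" using g by (auto simp: graph_def)
  moreover have "finite (Pow (verts G))" using g by (simp add: graph_def)
  ultimately show ?thesis by (rule finite_subset)
qed

lemma finite_allm: "graph G \<Longrightarrow> finite (allm G)"
proof -
  assume g: "graph G"
  have "allm G \<subseteq> Pow (edges G)" by (auto simp: allm_def)
  then show ?thesis using finite_edges[OF g] finite_subset by blast
qed

lemma allm_card: assumes g: "graph G" and M: "M \<in> allm G"
  shows "2 * card M \<le> card (verts G)"
proof -
  have fM: "finite M" using M finite_edges[OF g] by (auto simp: allm_def intro: finite_subset)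
  have fe: "\<forall>e\<in>M. finite e"
  proof
    fix e assume "e \<in> M"
    then have "card e = 2" using M g by (auto simp: allm_def graph_def)
    then show "finite e" by (intro card_ge_0_finite) simp
  qed
  have "card (\<Union>M) = (\<Sum>e\<in>M. card e)"
    using M fM fe by (intro card_Union_disjoint) (auto simp: allm_def pairwise_def disjnt_def)
  also have "\<dots> = (\<Sum>e\<in>M. 2)" using M g by (intro sum.cong) (auto simp: allm_def graph_def)
  also have "\<dots> = 2 * card M" by simp
  finally have "card (\<Union>M) = 2 * card M" .
  moreover have "\<Union>M \<subseteq> verts G" using M g by (auto simp: allm_def graph_def)
  moreover have "finite (verts G)" using g by (simp add: graph_def)
  ultimately show ?thesis by (metis card_mono)
qed

lemma sum_monom_const: "(\<Sum>x\<in>A. monom c n) = monom (of_nat (card A) * c) n"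
  by (induct A rule: infinite_finite_induct) (auto simp: add_monom algebra_simps)

lemma mp_alt: assumes g: "graph G"
  shows "match_poly G = (\<Sum>M\<in>allm G. monom ((-1) ^ card M) (card (verts G) - 2 * card M))"
proof -
  let ?n = "card (verts G)"
  let ?h = "\<lambda>M. monom ((-1::real) ^ card M) (card (verts G) - 2 * card M)"
  have "(\<Sum>M\<in>allm G. ?h M) = (\<Sum>r\<le>?n div 2. \<Sum>M\<in>{M. M \<in> allm G \<and> card M = r}. ?h M)"
    using allm_card[OF g] by (intro sum.group[symmetric] finite_allm g) fastforce+
  also have "\<dots> = match_poly G"
    unfolding match_poly_def
  proof (intro sum.cong refl)
    fix r
    have eq: "{M. M \<in> allm G \<and> card M = r} = matchings G r"
      by (auto simp: allm_def matchings_def)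
    have "(\<Sum>M\<in>{M. M \<in> allm G \<and> card M = r}. ?h M) = (\<Sum>M\<in>matchings G r. monom ((-1) ^ r) (?n - 2 * r))"
      unfolding eq by (intro sum.cong) (auto simp: matchings_def)
    also have "\<dots> = monom ((-1) ^ r * real (num_matchings G r)) (?n - 2 * r)"
      by (simp only: sum_monom_const) (simp add: num_matchings_def mult.commute)
    finally show "(\<Sum>M\<in>{M. M \<in> allm G \<and> card M = r}. ?h M) = monom ((-1) ^ r * real (num_matchings G r)) (?n - 2 * r)" .
  qed
  finally show ?thesis by simp
qed

lemma mp_nonzero: assumes g: "graph G" shows "match_poly G \<noteq> 0"
proof -
  have "coeff (match_poly G) (card (verts G)) = 1"
  proof -
    have "coeff (match_poly G) (card (verts G)) =
      (\<Sum>r\<le>card (verts G) div 2. if r = 0 then (-1) ^ r * real (num_matchings G r) else 0)"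
      unfolding match_poly_def coeff_sum coeff_monom by (intro sum.cong) auto
    also have "\<dots> = real (num_matchings G 0)" by (simp add: sum.delta)
    moreover have "matchings G 0 = {{}}" proof -
      have "M = {}" if "M \<subseteq> edges G" "card M = 0" for M
        using that finite_edges[OF g] finite_subset by fastforce
      then show ?thesis by (auto simp: matchings_def)
    qed
    ultimately show ?thesis by (simp add: num_matchings_def)
  qed
  then show ?thesis by auto
qed


definition nbrs :: "'a graph \<Rightarrow> 'a \<Rightarrow> 'a set" where
  "nbrs G u = {w. {u, w} \<in> edges G}"

lemma nbrs_props: assumes g: "graph G" and w: "w \<in> nbrs G u"
  shows "w \<noteq> u" "w \<in> verts G" "u \<in> verts G" "{u,w} \<in> edges G"
proof -
  have e: "{u,w} \<in> edges G" using w by (simp add: nbrs_def)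
  then have "card {u,w} = 2" "{u,w} \<subseteq> verts G" using g by (auto simp: graph_def)
  then show "w \<noteq> u" "w \<in> verts G" "u \<in> verts G" "{u,w} \<in> edges G" using e by auto
qed

lemma finite_nbrs: "graph G \<Longrightarrow> finite (nbrs G u)"
  using nbrs_props(2) by (metis finite_subset graph_def subsetI)

lemma allm_del1: "allm (del_verts G {u}) = {M\<in>allm G. \<forall>e\<in>M. u \<notin> e}"
  by (auto simp: allm_def)

lemma X_monom: "[:0,1:] * monom (c::real) k = monom c (Suc k)"
  by (simp add: monom_Suc smult_1_left)

lemma rec_vertex: fixes G :: "'a graph" assumes g: "graph G" and u: "u \<in> verts G"
  shows "match_poly G = [:0,1:] * match_poly (del_verts G {u})
           - (\<Sum>w\<in>nbrs G u. match_poly (del_verts G {u,w}))"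
proof -
  let ?n = "card (verts G)"
  define f :: "'a set set \<Rightarrow> real poly" where "f = (\<lambda>M. monom ((-1::real) ^ card M) (?n - 2 * card M))"
  define A1 where "A1 = {M\<in>allm G. \<forall>e\<in>M. u \<notin> e}"
  define A2 where "A2 = {M\<in>allm G. \<exists>e\<in>M. u \<in> e}"
  have fin: "finite (allm G)" by (rule finite_allm[OF g])
  have n: "?n \<ge> 1" using u g by (metis One_nat_def Suc_leI card_gt_0_iff empty_iff graph_def)
  have split: "allm G = A1 \<union> A2" "A1 \<inter> A2 = {}" by (auto simp: A1_def A2_def)
  have fA1: "finite A1" "finite A2" using fin split by auto
  have "match_poly G = sum f (allm G)" unfolding f_def by (rule mp_alt[OF g])
  also have "\<dots> = sum f A1 + sum f A2" unfolding split(1) by (rule sum.union_disjoint) (use fA1 split in auto)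
  finally have m: "match_poly G = sum f A1 + sum f A2" .
  have g1: "graph (del_verts G {u})" by (rule graph_del[OF g])
  have cu: "card (verts (del_verts G {u})) = ?n - 1" using u g by (simp add: graph_def)
  have s1: "sum f A1 = [:0,1:] * match_poly (del_verts G {u})"
  proof -
    have "[:0,1:] * match_poly (del_verts G {u}) =
       (\<Sum>M\<in>A1. [:0,1:] * monom ((-1) ^ card M) (?n - 1 - 2 * card M))"
      unfolding mp_alt[OF g1] sum_distrib_left cu A1_def allm_del1 ..
    also have "\<dots> = sum f A1"
    proof (intro sum.cong refl)
      fix M assume "M \<in> A1"
      then have "2 * card M \<le> ?n - 1" using allm_card[OF g1, of M] cu by (simp add: A1_def allm_del1)
      then have eq: "?n - 2 * card M = Suc (?n - 1 - 2 * card M)" using n by linarith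
      show "[:0,1:] * monom ((-1) ^ card M) (?n - 1 - 2 * card M) = f M"
        unfolding X_monom f_def eq ..
    qed
    finally show ?thesis ..
  qed
  define B where "B = (\<lambda>w. insert {u,w} ` allm (del_verts G {u,w}))"
  have A2eq: "A2 = (\<Union>w\<in>nbrs G u. B w)"
  proof
    show "A2 \<subseteq> (\<Union>w\<in>nbrs G u. B w)"
    proof
      fix M assume M: "M \<in> A2"
      then obtain e where e: "e \<in> M" "u \<in> e" and Ma: "M \<in> allm G" by (auto simp: A2_def)
      then have "e \<in> edges G" by (auto simp: allm_def)
      then have "card e = 2" using g by (auto simp: graph_def)
      then obtain a b where ab: "e = {a,b}" "a \<noteq> b" by (auto simp: card_2_iff)
      then obtain w where ew: "e = {u,w}" using e by blast
      have wN: "w \<in> nbrs G u" using \<open>e \<in> edges G\<close> ew by (simp add: nbrs_def)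
      have dj: "\<forall>f\<in>M - {e}. f \<inter> e = {}" using Ma e(1) by (auto simp: allm_def)
      have "M - {e} \<in> allm (del_verts G {u,w})"
        using Ma dj unfolding allm_def edges_del ew by auto
      moreover have "M = insert {u,w} (M - {e})" using e ew by auto
      ultimately show "M \<in> (\<Union>w\<in>nbrs G u. B w)" using wN unfolding B_def by blast
    qed
  next
    show "(\<Union>w\<in>nbrs G u. B w) \<subseteq> A2"
    proof
      fix M assume "M \<in> (\<Union>w\<in>nbrs G u. B w)"
      then obtain w M' where w: "w \<in> nbrs G u" and M': "M' \<in> allm (del_verts G {u,w})"
        and M: "M = insert {u,w} M'" unfolding B_def by blast
      have "{u,w} \<in> edges G" using w by (simp add: nbrs_def)
      then show "M \<in> A2" using M M' unfolding A2_def allm_def by auto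
    qed
  qed
  have s2: "sum f A2 = - (\<Sum>w\<in>nbrs G u. match_poly (del_verts G {u,w}))"
  proof -
    have "sum f A2 = (\<Sum>w\<in>nbrs G u. sum f (B w))"
      unfolding A2eq
    proof (rule sum.UNION_disjoint)
      show "finite (nbrs G u)" by (rule finite_nbrs[OF g])
      show "\<forall>w\<in>nbrs G u. finite (B w)" unfolding B_def using finite_allm[OF graph_del[OF g]] by blast
      show "\<forall>w1\<in>nbrs G u. \<forall>w2\<in>nbrs G u. w1 \<noteq> w2 \<longrightarrow> B w1 \<inter> B w2 = {}"
      proof (intro ballI impI)
        fix w1 w2 assume w: "w1 \<in> nbrs G u" "w2 \<in> nbrs G u" "w1 \<noteq> w2"
        show "B w1 \<inter> B w2 = {}"
        proof (rule ccontr)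
          assume "B w1 \<inter> B w2 \<noteq> {}"
          then obtain M1 M2 where M1: "M1 \<in> allm (del_verts G {u,w1})" and M2: "M2 \<in> allm (del_verts G {u,w2})"
            and eq: "insert {u,w1} M1 = insert {u,w2} M2" unfolding B_def by blast
          have "{u,w1} \<in> insert {u,w2} M2" using eq by blast
          moreover have "{u,w1} \<noteq> {u,w2}" using w by (metis doubleton_eq_iff)
          ultimately have "{u,w1} \<in> M2" by blast
          then show False using M2 by (auto simp: allm_def)
        qed
      qed
    qed
    also have "\<dots> = (\<Sum>w\<in>nbrs G u. - match_poly (del_verts G {u,w}))"
    proof (intro sum.cong refl)
      fix w assume w: "w \<in> nbrs G u"
      note wp = nbrs_props[OF g w]
      have gw: "graph (del_verts G {u,w})" by (rule graph_del[OF g])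
      have cw: "card (verts (del_verts G {u,w})) = ?n - 2"
        using wp g by (simp add: graph_def card_Diff_subset)
      have inj: "inj_on (insert {u,w}) (allm (del_verts G {u,w}))"
      proof (rule inj_onI)
        fix M1 M2 assume "M1 \<in> allm (del_verts G {u,w})" "M2 \<in> allm (del_verts G {u,w})"
          "insert {u,w} M1 = insert {u,w} M2"
        moreover have "{u,w} \<notin> M1" "{u,w} \<notin> M2" using calculation by (auto simp: allm_def)
        ultimately show "M1 = M2" by (metis insert_ident)
      qed
      have "sum f (B w) = (\<Sum>M\<in>allm (del_verts G {u,w}). f (insert {u,w} M))"
        unfolding B_def by (rule sum.reindex[OF inj, unfolded comp_def])
      also have "\<dots> = (\<Sum>M\<in>allm (del_verts G {u,w}). - monom ((-1) ^ card M) (?n - 2 - 2 * card M))"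
      proof (intro sum.cong refl)
        fix M assume M: "M \<in> allm (del_verts G {u,w})"
        have "{u,w} \<notin> M" using M by (auto simp: allm_def)
        moreover have "finite M" using M finite_edges[OF gw] by (auto simp: allm_def intro: finite_subset)
        ultimately have "card (insert {u,w} M) = Suc (card M)" by simp
        moreover have "?n - 2 * Suc (card M) = ?n - 2 - 2 * card M" by simp
        ultimately show "f (insert {u,w} M) = - monom ((-1) ^ card M) (?n - 2 - 2 * card M)"
          unfolding f_def by (simp add: minus_monom)
      qed
      also have "\<dots> = - match_poly (del_verts G {u,w})"
        unfolding mp_alt[OF gw] cw by (simp add: sum_negf)
      finally show "sum f (B w) = - match_poly (del_verts G {u,w})" .
    qed
    also have "\<dots> = - (\<Sum>w\<in>nbrs G u. match_poly (del_verts G {u,w}))" by (simp add: sum_negf)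
    finally show ?thesis .
  qed
  show ?thesis using m s1 s2 by simp
qed


definition paths :: "'a graph \<Rightarrow> 'a \<Rightarrow> 'a \<Rightarrow> 'a list set" where
  "paths G u v = {P. is_path G P u v}"

lemma finite_paths: assumes g: "graph G" shows "finite (paths G u v)"
proof -
  have "paths G u v \<subseteq> {xs. set xs \<subseteq> verts G \<and> length xs \<le> card (verts G)}"
  proof
    fix P assume "P \<in> paths G u v"
    then have "distinct P" "set P \<subseteq> verts G" by (auto simp: paths_def is_path_def)
    then show "P \<in> {xs. set xs \<subseteq> verts G \<and> length xs \<le> card (verts G)}"
      using g by (auto simp: graph_def distinct_card[symmetric] intro: card_mono)
  qed
  moreover have "finite {xs. set xs \<subseteq> verts G \<and> length xs \<le> card (verts G)}"
    using g by (intro finite_lists_length_le) (simp add: graph_def)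
  ultimately show ?thesis by (rule finite_subset)
qed

lemma edges_cons: "(\<forall>i. Suc i < length (a # b # xs) \<longrightarrow> R ((a#b#xs)!i) ((a#b#xs)!Suc i)) \<longleftrightarrow>
   R a b \<and> (\<forall>i. Suc i < length (b#xs) \<longrightarrow> R ((b#xs)!i) ((b#xs)!Suc i))"
  (is "?L \<longleftrightarrow> ?R")
proof
  assume L: ?L
  have "R a b" using L[rule_format, of 0] by simp
  moreover have "\<forall>i. Suc i < length (b#xs) \<longrightarrow> R ((b#xs)!i) ((b#xs)!Suc i)"
  proof (intro allI impI)
    fix i assume "Suc i < length (b#xs)"
    then show "R ((b#xs)!i) ((b#xs)!Suc i)" using L[rule_format, of "Suc i"] by simp
  qed
  ultimately show ?R ..
next
  assume R: ?R
  show ?L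
  proof (intro allI impI)
    fix i assume i: "Suc i < length (a#b#xs)"
    show "R ((a#b#xs)!i) ((a#b#xs)!Suc i)"
    proof (cases i)
      case 0 then show ?thesis using R by simp
    next
      case (Suc j) then show ?thesis using R i by auto
    qed
  qed
qed

lemma is_path_del: assumes "u \<notin> set Q"
  shows "is_path (del_verts G {u}) Q w v \<longleftrightarrow> is_path G Q w v"
proof -
  have "{Q ! i, Q ! Suc i} \<inter> {u} = {}" if "Suc i < length Q" for i
    using assms that nth_mem[of i Q] nth_mem[of "Suc i" Q] by auto
  then show ?thesis using assms unfolding is_path_def by auto
qed

lemma is_path_Cons: assumes "Q \<noteq> []"
  shows "is_path G (u # Q) u v \<longleftrightarrow> u \<notin> set Q \<and> u \<in> verts G \<and> {u, hd Q} \<in> edges G \<and> is_path G Q (hd Q) v"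
proof -
  obtain b xs where Q: "Q = b # xs" using assms by (cases Q) auto
  show ?thesis unfolding Q is_path_def edges_cons[where R = "\<lambda>x y. {x,y} \<in> edges G"] by auto
qed

lemma paths_decomp: assumes g: "graph G" and uv: "u \<noteq> v"
  shows "paths G u v = (if {u,v} \<in> edges G then {[u,v]} else {}) \<union>
     (\<Union>w\<in>nbrs G u - {v}. (Cons u) ` paths (del_verts G {u}) w v)"
proof (intro equalityI subsetI)
  fix P assume "P \<in> paths G u v"
  then have P: "is_path G P u v" by (simp add: paths_def)
  then obtain Q where PQ: "P = u # Q" unfolding is_path_def by (cases P) auto
  have Qne: "Q \<noteq> []" using P PQ uv by (auto simp: is_path_def)
  have c: "u \<notin> set Q" "u \<in> verts G" "{u, hd Q} \<in> edges G" "is_path G Q (hd Q) v"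
    using P is_path_Cons[OF Qne] PQ by auto
  show "P \<in> (if {u,v} \<in> edges G then {[u,v]} else {}) \<union>
     (\<Union>w\<in>nbrs G u - {v}. (Cons u) ` paths (del_verts G {u}) w v)"
  proof (cases "hd Q = v")
    case True
    obtain b xs where Q: "Q = b # xs" using Qne by (cases Q) auto
    have "xs = []"
    proof (rule ccontr)
      assume "xs \<noteq> []"
      then have "last xs \<in> set xs" by simp
      moreover have "last xs = v" using c(4) Q \<open>xs \<noteq> []\<close> by (simp add: is_path_def)
      moreover have "b \<notin> set xs" using c(4) Q by (simp add: is_path_def)
      ultimately show False using True Q by simp
    qed
    then have "P = [u,v]" using PQ Q True by simp
    then show ?thesis using c(3) True by simp
  next
    case False
    have "hd Q \<in> nbrs G u - {v}" using c(3) False by (simp add: nbrs_def)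
    moreover have "Q \<in> paths (del_verts G {u}) (hd Q) v"
      using c is_path_del[OF c(1)] by (simp add: paths_def)
    ultimately show ?thesis using PQ by blast
  qed
next
  fix P assume P: "P \<in> (if {u,v} \<in> edges G then {[u,v]} else {}) \<union>
     (\<Union>w\<in>nbrs G u - {v}. (Cons u) ` paths (del_verts G {u}) w v)"
  show "P \<in> paths G u v"
  proof (cases "P = [u,v] \<and> {u,v} \<in> edges G")
    case True
    have "{u,v} \<subseteq> verts G" using True g by (auto simp: graph_def)
    then show ?thesis using True uv by (auto simp: paths_def is_path_def edges_cons[where R = "\<lambda>x y. {x,y} \<in> edges G"])
  next
    case False
    then obtain w Q where w: "w \<in> nbrs G u" "w \<noteq> v" and Q: "is_path (del_verts G {u}) Q w v"
      and PQ: "P = u # Q" using P by (auto simp: paths_def split: if_splits)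
    have Qne: "Q \<noteq> []" and hQ: "hd Q = w" and uQ: "u \<notin> set Q" using Q by (auto simp: is_path_def)
    have "is_path G Q w v" using Q is_path_del[OF uQ] by simp
    then show ?thesis using is_path_Cons[OF Qne] PQ hQ uQ nbrs_props[OF g w(1)] by (simp add: paths_def)
  qed
qed


lemma sum_paths: fixes G :: "'a graph" assumes g: "graph G" and uv: "u \<noteq> v"
  shows "(\<Sum>P\<in>paths G u v. h P) = (if {u,v} \<in> edges G then h [u,v] else 0) +
     (\<Sum>w\<in>nbrs G u - {v}. \<Sum>Q\<in>paths (del_verts G {u}) w v. h (u # Q))"
proof -
  let ?S1 = "(if {u,v} \<in> edges G then {[u,v]} else {})"
  let ?S2 = "(\<Union>w\<in>nbrs G u - {v}. (Cons u) ` paths (del_verts G {u}) w v)"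
  have gH: "graph (del_verts G {u})" by (rule graph_del[OF g])
  have hdp: "hd Q = w" if "Q \<in> paths (del_verts G {u}) w v" for Q w
    using that by (simp add: paths_def is_path_def)
  have fin2: "finite ?S2" using finite_nbrs[OF g] finite_paths[OF gH] by auto
  have dj: "?S1 \<inter> ?S2 = {}"
  proof -
    have "[u,v] \<notin> ?S2"
    proof
      assume "[u,v] \<in> ?S2"
      then obtain w where "w \<in> nbrs G u - {v}" "[v] \<in> paths (del_verts G {u}) w v" by auto
      then show False using hdp by fastforce
    qed
    then show ?thesis by auto
  qed
  have "(\<Sum>P\<in>paths G u v. h P) = sum h ?S1 + sum h ?S2"
    unfolding paths_decomp[OF g uv] by (rule sum.union_disjoint) (use fin2 dj in auto)
  also have "sum h ?S1 = (if {u,v} \<in> edges G then h [u,v] else 0)" by simp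
  also have "sum h ?S2 = (\<Sum>w\<in>nbrs G u - {v}. sum h (Cons u ` paths (del_verts G {u}) w v))"
  proof (rule sum.UNION_disjoint)
    show "finite (nbrs G u - {v})" using finite_nbrs[OF g] by simp
    show "\<forall>w\<in>nbrs G u - {v}. finite (Cons u ` paths (del_verts G {u}) w v)"
      using finite_paths[OF gH] by simp
    show "\<forall>w1\<in>nbrs G u - {v}. \<forall>w2\<in>nbrs G u - {v}. w1 \<noteq> w2 \<longrightarrow>
      Cons u ` paths (del_verts G {u}) w1 v \<inter> Cons u ` paths (del_verts G {u}) w2 v = {}"
    proof (intro ballI impI)
      fix w1 w2 :: 'a assume "w1 \<noteq> w2"
      show "Cons u ` paths (del_verts G {u}) w1 v \<inter> Cons u ` paths (del_verts G {u}) w2 v = {}"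
      proof (rule ccontr)
        assume "Cons u ` paths (del_verts G {u}) w1 v \<inter> Cons u ` paths (del_verts G {u}) w2 v \<noteq> {}"
        then obtain Q where "Q \<in> paths (del_verts G {u}) w1 v" "Q \<in> paths (del_verts G {u}) w2 v" by auto
        then show False using hdp \<open>w1 \<noteq> w2\<close> by metis
      qed
    qed
  qed
  also have "\<dots> = (\<Sum>w\<in>nbrs G u - {v}. \<Sum>Q\<in>paths (del_verts G {u}) w v. h (u # Q))"
  proof (rule sum.cong[OF refl])
    fix w
    have "inj_on (Cons u) (paths (del_verts G {u}) w v)" by (auto simp: inj_on_def)
    then show "sum h (Cons u ` paths (del_verts G {u}) w v) = (\<Sum>Q\<in>paths (del_verts G {u}) w v. h (u # Q))"
      by (simp add: sum.reindex)
  qed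
  finally show ?thesis .
qed

lemma HL: fixes G :: "'a graph"
  assumes "graph G" "u \<in> verts G" "v \<in> verts G" "u \<noteq> v"
  shows "match_poly (del_verts G {u}) * match_poly (del_verts G {v})
          - match_poly G * match_poly (del_verts G {u,v})
        = (\<Sum>P\<in>paths G u v. match_poly (del_verts G (set P)) ^ 2)"
  using assms
proof (induction "card (verts G)" arbitrary: G u v rule: less_induct)
  case less
  note g = less.prems(1) and u = less.prems(2) and v = less.prems(3) and uv = less.prems(4)
  let ?m = match_poly
  define H where "H = del_verts G {u}"
  define N where "N = nbrs G u"
  define a where "a = (\<lambda>w. ?m (del_verts G {u,w}))"
  define b where "b = ?m (del_verts G {u,v})"
  define c where "c = (\<lambda>w. ?m (del_verts G {u,v,w}))"
  define h where "h = ?m H"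
  have gH: "graph H" unfolding H_def by (rule graph_del[OF g])
  have r1: "?m G = [:0,1:] * h - (\<Sum>w\<in>N. a w)"
    unfolding h_def H_def N_def a_def by (rule rec_vertex[OF g u])
  have gv: "graph (del_verts G {v})" by (rule graph_del[OF g])
  have nv: "nbrs (del_verts G {v}) u = N - {v}"
    using uv by (auto simp: nbrs_def N_def)
  have r2: "?m (del_verts G {v}) = [:0,1:] * b - (\<Sum>w\<in>N - {v}. c w)"
  proof -
    have "?m (del_verts G {v}) = [:0,1:] * ?m (del_verts (del_verts G {v}) {u})
        - (\<Sum>w\<in>nbrs (del_verts G {v}) u. ?m (del_verts (del_verts G {v}) {u,w}))"
      using u uv by (intro rec_vertex[OF gv]) simp
    also have "del_verts (del_verts G {v}) {u} = del_verts G {u,v}" by (simp add: del_del insert_commute)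
    also have "(\<lambda>w. del_verts (del_verts G {v}) {u,w}) = (\<lambda>w. del_verts G {u,v,w})"
      by (simp add: del_del insert_commute)
    finally show ?thesis unfolding nv b_def c_def .
  qed
  have IH: "a w * b - h * c w = (\<Sum>Q\<in>paths H w v. ?m (del_verts H (set Q)) ^ 2)"
    if w: "w \<in> N - {v}" for w
  proof -
    have wp: "w \<noteq> u" "w \<in> verts G" using nbrs_props[OF g] w by (auto simp: N_def)
    have "card (verts G) > 0" using u g by (auto simp: graph_def card_gt_0_iff)
    then have lt: "card (verts H) < card (verts G)"
      using u g unfolding H_def by (simp add: graph_def)
    have "?m (del_verts H {w}) * ?m (del_verts H {v}) - ?m H * ?m (del_verts H {w,v})
        = (\<Sum>Q\<in>paths H w v. ?m (del_verts H (set Q)) ^ 2)"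
      using wp w uv v by (intro less.hyps[OF lt gH]) (auto simp: H_def)
    moreover have "del_verts H {w} = del_verts G {u,w}" "del_verts H {v} = del_verts G {u,v}"
      "del_verts H {w,v} = del_verts G {u,v,w}"
      unfolding H_def del_del by (auto simp: insert_commute)
    ultimately show ?thesis unfolding a_def b_def c_def h_def by simp
  qed
  have vN: "v \<in> N \<longleftrightarrow> {u,v} \<in> edges G" by (simp add: N_def nbrs_def)
  have fN: "finite N" unfolding N_def by (rule finite_nbrs[OF g])
  have sumN: "(\<Sum>w\<in>N. a w * b) = (if {u,v} \<in> edges G then b * b else 0) + (\<Sum>w\<in>N - {v}. a w * b)"
  proof (cases "v \<in> N")
    case True
    then show ?thesis using vN fN by (simp add: sum.remove a_def b_def)
  next
    case False
    then show ?thesis using vN by simp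
  qed
  have "?m (del_verts G {u}) * ?m (del_verts G {v}) - ?m G * b
      = (\<Sum>w\<in>N. a w * b) - (\<Sum>w\<in>N - {v}. h * c w)"
    unfolding r1 r2 h_def[symmetric] H_def[symmetric]
    by (simp add: algebra_simps sum_distrib_left sum_distrib_right)
  also have "\<dots> = (if {u,v} \<in> edges G then b * b else 0) + (\<Sum>w\<in>N - {v}. a w * b - h * c w)"
    unfolding sumN by (simp add: sum_subtractf)
  also have "\<dots> = (if {u,v} \<in> edges G then b ^ 2 else 0) +
      (\<Sum>w\<in>N - {v}. \<Sum>Q\<in>paths H w v. ?m (del_verts H (set Q)) ^ 2)"
    using IH by (simp add: power2_eq_square)
  also have "\<dots> = (\<Sum>P\<in>paths G u v. ?m (del_verts G (set P)) ^ 2)"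
  proof -
    have "(\<lambda>Q. del_verts G (set (u # Q))) = (\<lambda>Q. del_verts H (set Q))"
      unfolding H_def del_del by auto
    then show ?thesis unfolding sum_paths[OF g uv] b_def N_def H_def
      by (simp add: del_del)
  qed
  finally show ?case unfolding b_def .
qed


lemma sos_root: fixes f :: "'b \<Rightarrow> real poly"
  assumes fin: "finite S" and d: "[:-t,1:] dvd (\<Sum>P\<in>S. f P ^ 2)" and P: "P \<in> S"
  shows "[:-t,1:] dvd f P"
proof -
  have "(\<Sum>P\<in>S. poly (f P) t ^ 2) = 0"
    using d by (simp add: poly_eq_0_iff_dvd[symmetric] poly_sum)
  then have "\<forall>P\<in>S. poly (f P) t ^ 2 = 0" using fin by (subst (asm) sum_nonneg_eq_0_iff) auto
  then have "poly (f P) t = 0" using P by simp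
  then show ?thesis by (simp add: poly_eq_0_iff_dvd)
qed

lemma pw_sq: "((x::'c::comm_ring_1) ^ (k + 1) * g) ^ 2 = x ^ (2 * k + 2) * g ^ 2"
proof -
  have "((x::'c) ^ (k + 1) * g) ^ 2 = (x ^ (k + 1)) ^ 2 * g ^ 2" by (rule power_mult_distrib)
  also have "(x ^ (k + 1)) ^ 2 = x ^ ((k+1) * 2)" by (rule power_mult[symmetric])
  also have "(k+1) * 2 = 2 * k + 2" by simp
  finally show ?thesis .
qed

lemma sos_k_aux: fixes f :: "'b \<Rightarrow> real poly"
  assumes fin: "finite S" and X: "X = [:-t,1:]"
  shows "X ^ (2 * k + 1) dvd (\<Sum>P\<in>S. f P ^ 2) \<Longrightarrow> P \<in> S \<Longrightarrow> X ^ (k + 1) dvd f P"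
proof (induction k arbitrary: f P)
  case 0
  then show ?case using sos_root[OF fin, of t f P] X by simp
next
  case (Suc k)
  have "X ^ (2 * k + 1) dvd X ^ (2 * Suc k + 1)" by (rule le_imp_power_dvd) simp
  then have d1: "X ^ (2 * k + 1) dvd (\<Sum>P\<in>S. f P ^ 2)" using Suc.prems(1) by (rule dvd_trans)
  have "\<forall>Q\<in>S. X ^ (k + 1) dvd f Q" using Suc.IH[OF d1] by blast
  then have "\<forall>Q\<in>S. \<exists>g. f Q = X ^ (k + 1) * g" by (auto simp: dvd_def)
  then obtain g where g: "\<forall>Q\<in>S. f Q = X ^ (k + 1) * g Q" by metis
  have "(\<Sum>Q\<in>S. f Q ^ 2) = X ^ (2 * k + 2) * (\<Sum>Q\<in>S. g Q ^ 2)"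
    unfolding sum_distrib_left
  proof (intro sum.cong refl)
    fix Q assume "Q \<in> S"
    show "f Q ^ 2 = X ^ (2 * k + 2) * g Q ^ 2" by (simp only: g[rule_format, OF \<open>Q \<in> S\<close>] pw_sq)
  qed
  moreover have "X ^ (2 * Suc k + 1) = X ^ (2 * k + 2) * X" by (simp add: algebra_simps)
  ultimately have "X ^ (2 * k + 2) * X dvd X ^ (2 * k + 2) * (\<Sum>Q\<in>S. g Q ^ 2)"
    using Suc.prems(1) by simp
  moreover have "X \<noteq> 0" using X by simp
  ultimately have "X dvd (\<Sum>Q\<in>S. g Q ^ 2)" by (subst (asm) dvd_times_left_cancel_iff) auto
  then have "X dvd g P" using sos_root[OF fin _ Suc.prems(2)] X by blast
  then have "X ^ (k + 1) * X dvd X ^ (k + 1) * g P" by (rule mult_dvd_mono[OF dvd_refl])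
  moreover have "X ^ (Suc k + 1) = X ^ (k + 1) * X" by simp
  ultimately show ?case using g Suc.prems(2) by simp
qed

theorem lemma6p3:
  fixes G :: "'a graph" and \<theta> :: real and u v :: 'a
  assumes "graph G"
    and "u \<noteq> v"
    and "theta_positive \<theta> G u" and "theta_positive \<theta> G v"
  shows "mult \<theta> (del_verts G {u, v}) \<le> mult \<theta> G \<longleftrightarrow>
         (\<exists>P. is_path G P u v \<and> mult \<theta> (del_verts G (set P)) \<le> mult \<theta> G)"
proof -
  note g = assms(1)
  define X where "X = [:-\<theta>,1:]"
  let ?m = match_poly
  define m where "m = mult \<theta> G"
  have u: "u \<in> verts G" and v: "v \<in> verts G"
    and mu: "mult \<theta> (del_verts G {u}) = m + 1" and mv: "mult \<theta> (del_verts G {v}) = m + 1"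
    using assms(3,4) by (auto simp: theta_positive_def m_def)
  have nz: "\<And>Y. ?m (del_verts G Y) \<noteq> 0" using mp_nonzero graph_del[OF g] by blast
  have dvd_iff: "\<And>Y n. X ^ n dvd ?m (del_verts G Y) \<longleftrightarrow> n \<le> mult \<theta> (del_verts G Y)"
    using nz unfolding X_def by (simp add: order_divides mult_def)
  define A where "A = ?m (del_verts G {u}) * ?m (del_verts G {v})"
  define B where "B = ?m G * ?m (del_verts G {u,v})"
  define D where "D = (\<Sum>P\<in>paths G u v. ?m (del_verts G (set P)) ^ 2)"
  have ABD: "A - B = D" unfolding A_def B_def D_def by (rule HL[OF g u v assms(2)])
  have dA: "X ^ (2 * m + 2) dvd A"
  proof -
    have "X ^ (m+1) dvd ?m (del_verts G {u})" "X ^ (m+1) dvd ?m (del_verts G {v})"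
      using dvd_iff[of "m+1"] mu mv by auto
    then have "X ^ (m+1) * X ^ (m+1) dvd A" unfolding A_def by (rule mult_dvd_mono)
    moreover have "2 * m + 2 = (m+1) + (m+1)" by simp
    ultimately show ?thesis by (simp only: power_add)
  qed
  have oB: "order \<theta> B = m + mult \<theta> (del_verts G {u,v})"
    unfolding B_def using nz mp_nonzero[OF g]
    by (subst order_mult) (auto simp: mult_def m_def)
  have Bnz: "B \<noteq> 0" unfolding B_def using nz mp_nonzero[OF g] by simp
  have dB: "\<And>n. X ^ n dvd B \<longleftrightarrow> n \<le> order \<theta> B" using Bnz unfolding X_def by (simp add: order_divides)
  show ?thesis
  proof
    assume le: "mult \<theta> (del_verts G {u, v}) \<le> mult \<theta> G"
    show "\<exists>P. is_path G P u v \<and> mult \<theta> (del_verts G (set P)) \<le> mult \<theta> G"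
    proof (rule ccontr)
      assume "\<not> ?thesis"
      then have "\<forall>P\<in>paths G u v. m + 1 \<le> mult \<theta> (del_verts G (set P))"
        by (auto simp: paths_def m_def not_le)
      then have "\<forall>P\<in>paths G u v. X ^ (m+1) dvd ?m (del_verts G (set P))"
        using dvd_iff by blast
      then have "\<forall>P\<in>paths G u v. X ^ (2*m+2) dvd ?m (del_verts G (set P)) ^ 2"
      proof (intro ballI)
        fix P assume "\<forall>P\<in>paths G u v. X ^ (m+1) dvd ?m (del_verts G (set P))" "P \<in> paths G u v"
        then obtain q where "?m (del_verts G (set P)) = X ^ (m+1) * q" by (auto simp: dvd_def)
        then show "X ^ (2*m+2) dvd ?m (del_verts G (set P)) ^ 2" by (simp only: pw_sq) simp
      qed
      then have "X ^ (2*m+2) dvd D" unfolding D_def by (intro dvd_sum) auto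
      then have "X ^ (2*m+2) dvd A - D" using dA by (rule dvd_diff[rotated])
      moreover have "A - D = B" using ABD by simp
      ultimately have "X ^ (2*m+2) dvd B" by simp
      then have "2*m+2 \<le> order \<theta> B" using dB by blast
      then show False using oB le m_def by simp
    qed
  next
    assume "\<exists>P. is_path G P u v \<and> mult \<theta> (del_verts G (set P)) \<le> mult \<theta> G"
    then obtain P0 where P0: "P0 \<in> paths G u v" and le: "mult \<theta> (del_verts G (set P0)) \<le> m"
      by (auto simp: paths_def m_def)
    show "mult \<theta> (del_verts G {u, v}) \<le> mult \<theta> G"
    proof (rule ccontr)
      assume "\<not> ?thesis"
      then have "2*m+1 \<le> order \<theta> B" using oB m_def by simp
      then have "X ^ (2*m+1) dvd B" using dB by blast
      moreover have "X ^ (2*m+1) dvd X ^ (2*m+2)" by (rule le_imp_power_dvd) simp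
      then have "X ^ (2*m+1) dvd A" using dA by (rule dvd_trans)
      ultimately have "X ^ (2*m+1) dvd A - B" by (intro dvd_diff)
      then have "X ^ (2*m+1) dvd D" using ABD by simp
      then have "X ^ (m+1) dvd ?m (del_verts G (set P0))"
        using sos_k_aux[OF finite_paths[OF g] X_def, where k = m and f = "\<lambda>P. ?m (del_verts G (set P))" and P = P0] P0
        unfolding D_def by blast
      then have "m + 1 \<le> mult \<theta> (del_verts G (set P0))" using dvd_iff by blast
      then show False using le by simp
    qed
  qed
qed

end
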